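(* The map $f$ is strictly increasing on $[a_0-1,a_0]$: if $x_1,x_2\in[a_0-1,a_0]$ and $x_1<x_2$, then $f(x_1)<f(x_2)$.
   Context: Let $Q=(q_k)_{k\ge1}$ be a sequence of integers with $q_k\ge 2$, and let $q\ge 2$ be an integer with $q_k\le q$ for all $k$. Put $a_0=\sum_{k\ge1}\frac{q_{2k}-1}{q_1q_2\cdots q_{2k}}$. Every $x\in[a_0-1,a_0]$ can be written as $x=\Delta^{-Q}_{\varepsilon_1\varepsilon_2\ldots}:=\sum_{k\ge1}\frac{(-1)^k\varepsilon_k}{q_1q_2\cdots q_k}$ with digits $\varepsilon_k\in\{0,1,\ldots,q_k-1\}$. Nega-$Q$-rational points have two representations, $\Delta^{-Q}_{\varepsilon_1\ldots\varepsilon_{m}[q_{m+1}-1]0[q_{m+3}-1]0\ldots}=\Delta^{-Q}_{\varepsilon_1\ldots\varepsilon_{m-1}[\varepsilon_m-1]0[q_{m+2}-1]0[q_{m+4}-1]0\ldots}$, and by convention only the first is used; other points have a unique representation. The map $f:[a_0-1,a_0]\to\mathbb R$ is $f\left(\Delta^{-Q}_{\varepsilon_1\varepsilon_2\ldots}\right)=\sum_{n\ge1}\frac{\varepsilon_n}{(-q)^n}$. *)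

theory Defs
  imports Complex_Main
begin

text \<open>The sequence Q = (q_k)_{k>=1} is a function Q :: nat => nat, with Q 0 unused.
  Digit sequences are functions eps :: nat => nat with digits eps k for k >= 1;
  we normalise eps 0 = 0 so that the representation is a unique object.\<close>

definition qprod :: "(nat \<Rightarrow> nat) \<Rightarrow> nat \<Rightarrow> real" where
  "qprod Q k = (\<Prod>i\<in>{1..k}. real (Q i))"

definition a0 :: "(nat \<Rightarrow> nat) \<Rightarrow> real" where
  "a0 Q = (\<Sum>k. (real (Q (2 * Suc k)) - 1) / qprod Q (2 * Suc k))"

definition nega_val :: "(nat \<Rightarrow> nat) \<Rightarrow> (nat \<Rightarrow> nat) \<Rightarrow> real" where
  "nega_val Q eps = (\<Sum>n. (-1) ^ Suc n * real (eps (Suc n)) / qprod Q (Suc n))"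

definition digit_seq :: "(nat \<Rightarrow> nat) \<Rightarrow> (nat \<Rightarrow> nat) \<Rightarrow> bool" where
  "digit_seq Q eps \<longleftrightarrow> eps 0 = 0 \<and> (\<forall>k\<ge>1. eps k < Q k)"

text \<open>Second (excluded) representation of a nega-Q-rational point:
  eps_1 ... eps_{m-1} [eps_m - 1] 0 [q_{m+2}-1] 0 [q_{m+4}-1] 0 ...,
  i.e. digit at position m is at most q_m - 2 and afterwards the digits are
  0 at positions m+1, m+3, ... and q_j - 1 at positions m+2, m+4, ...\<close>
definition second_rep :: "(nat \<Rightarrow> nat) \<Rightarrow> (nat \<Rightarrow> nat) \<Rightarrow> bool" where
  "second_rep Q eps \<longleftrightarrow> (\<exists>m\<ge>1. eps m < Q m - 1 \<and>
      (\<forall>j\<ge>1. eps (m + j) = (if odd j then 0 else Q (m + j) - 1)))"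

definition admissible :: "(nat \<Rightarrow> nat) \<Rightarrow> (nat \<Rightarrow> nat) \<Rightarrow> bool" where
  "admissible Q eps \<longleftrightarrow> digit_seq Q eps \<and> \<not> second_rep Q eps"

definition nega_rep :: "(nat \<Rightarrow> nat) \<Rightarrow> real \<Rightarrow> nat \<Rightarrow> nat" where
  "nega_rep Q x = (THE eps. admissible Q eps \<and> nega_val Q eps = x)"

definition fmap :: "(nat \<Rightarrow> nat) \<Rightarrow> nat \<Rightarrow> real \<Rightarrow> real" where
  "fmap Q q x = (\<Sum>n. real (nega_rep Q x (Suc n)) / (- real q) ^ Suc n)"

end

theory Submission imports Defs begin

lemma tele_gen:
  fixes R r :: "nat \<Rightarrow> real"
  assumes R0: "R 0 = 1" and RS: "\<And>n. R (Suc n) = R n * r (Suc n)"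
    and r2: "\<And>n. n \<ge> 1 \<Longrightarrow> r n \<ge> 2"
  shows "\<And>n. R n \<ge> 2 ^ n" and "(\<lambda>n. 1 / R n) \<longlonglongrightarrow> 0"
    and "\<And>m. (\<lambda>j. (r (j + Suc m) - 1) / R (j + Suc m)) sums (1 / R m)"
proof -
  show ge: "R n \<ge> 2 ^ n" for n
  proof (induction n)
    case 0 then show ?case using R0 by simp
  next
    case (Suc n)
    have "(2::real) ^ Suc n = 2 ^ n * 2" by simp
    also have "\<dots> \<le> R n * r (Suc n)"
      by (rule mult_mono) (use Suc r2[of "Suc n"] in \<open>auto intro: order_trans[OF zero_le_power[of 2 n]]\<close>)
    finally show ?case using RS by simp
  qed
  have pos: "R n > 0" for n using ge[of n] by (smt (verit) zero_less_power)
  show lim: "(\<lambda>n. 1 / R n) \<longlonglongrightarrow> 0"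
  proof (rule tendsto_sandwich[of "\<lambda>_. 0" _ _ "\<lambda>n. (1/2) ^ n"])
    show "\<forall>\<^sub>F n in sequentially. 0 \<le> 1 / R n"
      using pos by (auto intro!: always_eventually less_imp_le)
    show "\<forall>\<^sub>F n in sequentially. 1 / R n \<le> (1 / 2) ^ n"
      using ge pos by (auto simp: power_one_over intro!: always_eventually divide_left_mono)
    show "(\<lambda>n. (1 / 2::real) ^ n) \<longlonglongrightarrow> 0" by (rule LIMSEQ_realpow_zero) auto
  qed simp
  fix m
  have l2: "(\<lambda>j. 1 / R (j + m)) \<longlonglongrightarrow> 0"
    using LIMSEQ_ignore_initial_segment[OF lim, of m] .
  have "(\<lambda>j. 1 / R (j + m) - 1 / R (Suc j + m)) sums (1 / R (0 + m) - 0)"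
    by (rule telescope_sums'[OF l2])
  moreover have "1 / R (j + m) - 1 / R (Suc j + m) = (r (j + Suc m) - 1) / R (j + Suc m)" for j
  proof -
    have "R (Suc j + m) = R (j + m) * r (j + Suc m)" using RS[of "j+m"] by simp
    moreover have "r (j + Suc m) > 0" using r2[of "j + Suc m"] by simp
    ultimately show ?thesis using pos[of "j+m"] by (simp add: field_simps)
  qed
  ultimately show "(\<lambda>j. (r (j + Suc m) - 1) / R (j + Suc m)) sums (1 / R m)" by simp
qed

lemma qprod_0: "qprod Q 0 = 1" by (simp add: qprod_def)
lemma qprod_Suc: "qprod Q (Suc n) = qprod Q n * real (Q (Suc n))"
  by (simp add: qprod_def prod.nat_ivl_Suc' mult.commute)

definition V :: "(nat \<Rightarrow> real) \<Rightarrow> (nat \<Rightarrow> nat) \<Rightarrow> real" where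
  "V w e = (\<Sum>n. (-1) ^ n * real (e n) * w n)"

lemma V_summable:
  assumes "digit_seq Q e" and wpos: "\<And>n. n \<ge> 1 \<Longrightarrow> w n > 0"
    and cge: "\<And>n. n \<ge> 1 \<Longrightarrow> real (Q n) - 1 \<le> c n"
    and sc: "summable (\<lambda>n. c n * w n)"
  shows "summable (\<lambda>n. (-1) ^ n * real (e n) * w n)"
proof (rule summable_comparison_test[OF _ sc], intro exI allI impI)
  fix n :: nat assume n: "n \<ge> 1"
  have "e n < Q n" using assms(1) n by (auto simp: digit_seq_def)
  then have "real (e n) \<le> c n" using cge[OF n] by linarith
  then show "norm ((-1) ^ n * real (e n) * w n) \<le> c n * w n"
    using wpos[OF n] by (simp add: abs_mult mult_right_mono)
qed

lemma cmp:
  fixes w c :: "nat \<Rightarrow> real" and e1 e2 :: "nat \<Rightarrow> nat"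
  assumes a1: "admissible Q e1" and a2: "admissible Q e2"
    and wpos: "\<And>n. n \<ge> 1 \<Longrightarrow> w n > 0"
    and cge: "\<And>n. n \<ge> 1 \<Longrightarrow> real (Q n) - 1 \<le> c n"
    and sc: "summable (\<lambda>n. c n * w n)"
    and tail: "(\<Sum>j. c (j + Suc m) * w (j + Suc m)) \<le> w m"
    and m1: "m \<ge> 1" and eq: "\<And>n. n < m \<Longrightarrow> e1 n = e2 n"
    and D: "(-1) ^ m * (real (e2 m) - real (e1 m)) > 0"
  shows "V w e1 < V w e2"
proof -
  have d1: "digit_seq Q e1" and d2: "digit_seq Q e2" and n1: "\<not> second_rep Q e1"
    and n2: "\<not> second_rep Q e2" using a1 a2 by (auto simp: admissible_def)
  define f where "f n = (-1) ^ n * (real (e2 n) - real (e1 n)) * w n" for n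
  have s1: "summable (\<lambda>n. (-1) ^ n * real (e1 n) * w n)"
    by (rule V_summable[OF d1 wpos cge sc])
  have s2: "summable (\<lambda>n. (-1) ^ n * real (e2 n) * w n)"
    by (rule V_summable[OF d2 wpos cge sc])
  have feq: "f = (\<lambda>n. (-1) ^ n * real (e2 n) * w n - (-1) ^ n * real (e1 n) * w n)"
    by (auto simp: f_def algebra_simps)
  have sf: "summable f" using summable_diff[OF s2 s1] feq by simp
  have Vd: "V w e2 - V w e1 = suminf f"
    using suminf_diff[OF s2 s1] feq by (simp add: V_def)
  have split: "suminf f = (\<Sum>j. f (j + Suc m)) + (\<Sum>i<Suc m. f i)"
    by (rule suminf_split_initial_segment[OF sf])
  have "(\<Sum>i<Suc m. f i) = f m"
    using eq by (simp add: f_def)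
  moreover have "f m \<ge> w m"
  proof -
    have "(-1) ^ m * (real (e2 m) - real (e1 m)) \<ge> 1"
    proof (cases "even m")
      case True then show ?thesis using D by simp
    next
      case False then show ?thesis using D by simp
    qed
    then show ?thesis using wpos[OF m1] mult_right_mono[of 1 "(-1) ^ m * (real (e2 m) - real (e1 m))" "w m"]
      unfolding f_def by simp
  qed
  ultimately have fm: "(\<Sum>i<Suc m. f i) \<ge> w m" by simp
  define g where "g j = f (j + Suc m) + c (j + Suc m) * w (j + Suc m)" for j
  have bnd: "\<bar>real (e2 n) - real (e1 n)\<bar> \<le> real (Q n) - 1" if "n \<ge> 1" for n
  proof -
    have "e1 n < Q n" "e2 n < Q n" using d1 d2 that by (auto simp: digit_seq_def)
    then show ?thesis by linarith
  qed
  have gnn: "g j \<ge> 0" for j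
  proof -
    let ?n = "j + Suc m"
    have "\<bar>(-1) ^ ?n * (real (e2 ?n) - real (e1 ?n))\<bar> \<le> c ?n"
      using bnd[of ?n] cge[of ?n] by (simp add: abs_mult)
    then have "(-1) ^ ?n * (real (e2 ?n) - real (e1 ?n)) + c ?n \<ge> 0" by linarith
    then have "((-1) ^ ?n * (real (e2 ?n) - real (e1 ?n)) + c ?n) * w ?n \<ge> 0"
      using wpos[of ?n] by simp
    then show ?thesis by (simp add: g_def f_def algebra_simps)
  qed
  have sft: "summable (\<lambda>j. f (j + Suc m))" by (rule summable_ignore_initial_segment[OF sf])
  have sct: "summable (\<lambda>j. c (j + Suc m) * w (j + Suc m))" using summable_ignore_initial_segment[OF sc, of "Suc m"] by simp
  have sg: "summable g" and sgv: "suminf g = (\<Sum>j. f (j + Suc m)) + (\<Sum>j. c (j + Suc m) * w (j + Suc m))"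
  proof -
    have ge: "g = (\<lambda>j. f (j + Suc m) + c (j + Suc m) * w (j + Suc m))" by (simp add: g_def fun_eq_iff)
    show "summable g" unfolding ge by (rule summable_add[OF sft sct])
    show "suminf g = (\<Sum>j. f (j + Suc m)) + (\<Sum>j. c (j + Suc m) * w (j + Suc m))"
      unfolding ge by (rule suminf_add[OF sft sct, symmetric])
  qed
  have key: "V w e2 - V w e1 \<ge> suminf g"
    using Vd split fm sgv tail by linarith
  show ?thesis
  proof (cases "suminf g = 0")
    case False
    with suminf_nonneg[OF sg gnn] key show ?thesis by linarith
  next
    case True
    then have g0: "\<And>j. g j = 0" using suminf_eq_zero_iff[OF sg gnn] by blast
    have ext: "(-1) ^ n * (real (e2 n) - real (e1 n)) = - (real (Q n) - 1)" if "n > m" for n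
    proof -
      define j where "j = n - Suc m"
      have nj: "n = j + Suc m" using that by (simp add: j_def)
      have "g j = ((-1) ^ n * (real (e2 n) - real (e1 n)) + c n) * w n"
        unfolding g_def f_def nj by (simp only: distrib_right)
      then have "((-1) ^ n * (real (e2 n) - real (e1 n)) + c n) * w n = 0"
        using g0[of j] by simp
      moreover have "w n > 0" using wpos[of n] that by simp
      ultimately have A: "(-1) ^ n * (real (e2 n) - real (e1 n)) = - c n" by simp
      have "\<bar>(-1) ^ n * (real (e2 n) - real (e1 n))\<bar> = \<bar>real (e2 n) - real (e1 n)\<bar>"
        by (simp add: abs_mult)
      moreover have "\<bar>real (e2 n) - real (e1 n)\<bar> \<le> real (Q n) - 1" using bnd[of n] that by simp
      moreover have "real (Q n) - 1 \<le> c n" using cge[of n] that by simp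
      ultimately show ?thesis using A by linarith
    qed
    have lt1: "e1 n < Q n" "e2 n < Q n" if "n \<ge> 1" for n
      using d1 d2 that by (auto simp: digit_seq_def)
    show ?thesis
    proof (cases "even m")
      case True
      have "second_rep Q e1"
        unfolding second_rep_def
      proof (intro exI conjI allI impI)
        show "m \<ge> 1" by fact
        have "(-1::real) ^ m = 1" using True by simp
        with D have "real (e1 m) < real (e2 m)" by simp
        then show "e1 m < Q m - 1" using lt1[OF m1] by linarith
        fix j :: nat assume j: "j \<ge> 1"
        have E: "(-1) ^ (m + j) * (real (e2 (m+j)) - real (e1 (m+j))) = - (real (Q (m+j)) - 1)"
          using ext[of "m+j"] j by simp
        have L: "e1 (m+j) < Q (m+j)" "e2 (m+j) < Q (m+j)" using lt1[of "m+j"] m1 by auto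
        show "e1 (m + j) = (if odd j then 0 else Q (m + j) - 1)"
        proof (cases "odd j")
          case True
          then have "odd (m+j)" using \<open>even m\<close> by simp
          then have "(-1::real) ^ (m+j) = -1" by simp
          with E have "real (e1 (m+j)) = 0" using L by (simp add: of_nat_less_iff[symmetric]; linarith)
          then show ?thesis using True by simp
        next
          case False
          then have "even (m+j)" using \<open>even m\<close> by simp
          then have "(-1::real) ^ (m+j) = 1" by simp
          with E have "real (e1 (m+j)) = real (Q (m+j)) - 1" using L by (simp add: of_nat_less_iff[symmetric]; linarith)
          then have "e1 (m+j) = Q (m+j) - 1" using L by linarith
          then show ?thesis using False by simp
        qed
      qed
      with n1 show ?thesis by simp
    next
      case False
      have "second_rep Q e2"
        unfolding second_rep_def
      proof (intro exI conjI allI impI)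
        show "m \<ge> 1" by fact
        have "(-1::real) ^ m = -1" using False by simp
        with D have "real (e2 m) < real (e1 m)" by simp
        then show "e2 m < Q m - 1" using lt1[OF m1] by linarith
        fix j :: nat assume j: "j \<ge> 1"
        have E: "(-1) ^ (m + j) * (real (e2 (m+j)) - real (e1 (m+j))) = - (real (Q (m+j)) - 1)"
          using ext[of "m+j"] j by simp
        have L: "e1 (m+j) < Q (m+j)" "e2 (m+j) < Q (m+j)" using lt1[of "m+j"] m1 by auto
        show "e2 (m + j) = (if odd j then 0 else Q (m + j) - 1)"
        proof (cases "odd j")
          case True
          then have "even (m+j)" using \<open>odd m\<close> by simp
          then have "(-1::real) ^ (m+j) = 1" by simp
          with E have "real (e2 (m+j)) = 0" using L by (simp add: of_nat_less_iff[symmetric]; linarith)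
          then show ?thesis using True by simp
        next
          case False
          then have "odd (m+j)" using \<open>odd m\<close> by simp
          then have "(-1::real) ^ (m+j) = -1" by simp
          with E have "real (e2 (m+j)) = real (Q (m+j)) - 1" using L by (simp add: of_nat_less_iff[symmetric]; linarith)
          then have "e2 (m+j) = Q (m+j) - 1" using L by linarith
          then show ?thesis using False by simp
        qed
      qed
      with n2 show ?thesis by simp
    qed
  qed
qed

definition dig :: "(nat \<Rightarrow> nat) \<Rightarrow> nat \<Rightarrow> real \<Rightarrow> nat" where
  "dig Q n r = (if even n then (if r \<le> 0 then 0 else nat (\<lceil>real (Q n) * r\<rceil> - 1))
     else (if r \<ge> 1 then Q n - 1 else nat \<lfloor>real (Q n) * r\<rfloor>))"

fun res :: "(nat \<Rightarrow> nat) \<Rightarrow> real \<Rightarrow> nat \<Rightarrow> real" where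
  "res Q y 0 = y"
| "res Q y (Suc n) = real (Q (Suc n)) * res Q y n - real (dig Q (Suc n) (res Q y n))"

lemma dig_step:
  assumes Q2: "Q n \<ge> 2" and r0: "0 \<le> r" and r1: "r \<le> 1"
  shows "dig Q n r \<le> Q n - 1" "0 \<le> real (Q n) * r - real (dig Q n r)"
    "real (Q n) * r - real (dig Q n r) \<le> 1"
    "even n \<Longrightarrow> dig Q n r > 0 \<Longrightarrow> real (Q n) * r - real (dig Q n r) > 0"
    "odd n \<Longrightarrow> dig Q n r < Q n - 1 \<Longrightarrow> real (Q n) * r - real (dig Q n r) < 1"
proof -
  have Qr: "real (Q n) * r \<le> real (Q n)" using r1 Q2 by (simp add: mult_left_le)
  have Qr0: "real (Q n) * r \<ge> 0" using r0 by simp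
  have QQ: "real (Q n - 1) = real (Q n) - 1" using Q2 by simp
  have "dig Q n r \<le> Q n - 1 \<and> 0 \<le> real (Q n) * r - real (dig Q n r)
    \<and> real (Q n) * r - real (dig Q n r) \<le> 1
    \<and> (even n \<longrightarrow> dig Q n r > 0 \<longrightarrow> real (Q n) * r - real (dig Q n r) > 0)
    \<and> (odd n \<longrightarrow> dig Q n r < Q n - 1 \<longrightarrow> real (Q n) * r - real (dig Q n r) < 1)"
  proof (cases "even n")
    case True
    show ?thesis
    proof (cases "r \<le> 0")
      case True
      with r0 have "r = 0" by simp
      then show ?thesis using \<open>even n\<close> by (simp add: dig_def)
    next
      case False
      then have pos: "real (Q n) * r > 0" using Q2 by simp
      define c where "c = \<lceil>real (Q n) * r\<rceil>"
      have c1: "c \<ge> 1" using pos by (simp add: c_def)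
      have c2: "c \<le> int (Q n)" using Qr by (simp add: c_def ceiling_le_iff)
      have c3: "real_of_int c - 1 < real (Q n) * r" "real (Q n) * r \<le> real_of_int c"
        unfolding c_def by linarith+
      have d: "dig Q n r = nat (c - 1)" using \<open>even n\<close> False by (simp add: dig_def c_def)
      have dr: "real (dig Q n r) = real_of_int c - 1" using d c1 by simp
      have "dig Q n r \<le> Q n - 1" using d c2 by linarith
      then show ?thesis using dr c3 \<open>even n\<close> by auto
    qed
  next
    case False
    show ?thesis
    proof (cases "r \<ge> 1")
      case True
      with r1 have "r = 1" by simp
      then show ?thesis using \<open>odd n\<close> QQ by (simp add: dig_def)
    next
      case False
      then have lt: "real (Q n) * r < real (Q n)" using Q2 by simp
      define c where "c = \<lfloor>real (Q n) * r\<rfloor>"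
      have c1: "c \<ge> 0" using Qr0 by (simp add: c_def)
      have c2: "c \<le> int (Q n) - 1" using lt by (simp add: c_def floor_less_iff)
      have c3: "real_of_int c \<le> real (Q n) * r" "real (Q n) * r < real_of_int c + 1"
        unfolding c_def by linarith+
      have d: "dig Q n r = nat c" using \<open>odd n\<close> False by (simp add: dig_def c_def)
      have dr: "real (dig Q n r) = real_of_int c" using d c1 by simp
      have "dig Q n r \<le> Q n - 1" using d c2 by linarith
      then show ?thesis using dr c3 \<open>odd n\<close> by auto
    qed
  qed
  then show "dig Q n r \<le> Q n - 1" "0 \<le> real (Q n) * r - real (dig Q n r)"
    "real (Q n) * r - real (dig Q n r) \<le> 1"
    "even n \<Longrightarrow> dig Q n r > 0 \<Longrightarrow> real (Q n) * r - real (dig Q n r) > 0"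
    "odd n \<Longrightarrow> dig Q n r < Q n - 1 \<Longrightarrow> real (Q n) * r - real (dig Q n r) < 1"
    by auto
qed

lemma P_facts:
  assumes Q2: "\<forall>k\<ge>1. 2 \<le> Q k"
  shows "\<And>n. qprod Q n > 0" "(\<lambda>n. 1 / qprod Q n) \<longlonglongrightarrow> 0"
    "\<And>m. (\<lambda>j. (real (Q (j + Suc m)) - 1) / qprod Q (j + Suc m)) sums (1 / qprod Q m)"
proof -
  have r2: "\<And>n. n \<ge> 1 \<Longrightarrow> real (Q n) \<ge> 2" using Q2 by auto
  note T = tele_gen[of "qprod Q" "\<lambda>n. real (Q n)", OF qprod_0 qprod_Suc r2]
  show "qprod Q n > 0" for n using T(1)[of n] by (smt (verit) zero_less_power)
  show "(\<lambda>n. 1 / qprod Q n) \<longlonglongrightarrow> 0" by (rule T(2))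
  show "(\<lambda>j. (real (Q (j + Suc m)) - 1) / qprod Q (j + Suc m)) sums (1 / qprod Q m)" for m
    by (rule T(3))
qed

lemma exists_rep:
  assumes Q2: "\<forall>k\<ge>1. 2 \<le> Q k" and x: "x \<in> {a0 Q - 1 .. a0 Q}"
  shows "\<exists>e. admissible Q e \<and> nega_val Q e = x"
proof -
  define y where "y = a0 Q - x"
  have y0: "0 \<le> y" and y1: "y \<le> 1" using x by (auto simp: y_def)
  define P where "P = qprod Q"
  define r where "r = res Q y"
  define d where "d n = (if n = 0 then 0 else dig Q n (r (n - 1)))" for n
  have Ppos: "\<And>n. P n > 0" and Plim: "(\<lambda>n. 1 / P n) \<longlonglongrightarrow> 0"
    and Ptail: "\<And>m. (\<lambda>j. (real (Q (j + Suc m)) - 1) / P (j + Suc m)) sums (1 / P m)"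
    using P_facts[OF Q2] unfolding P_def by auto
  have PS: "P (Suc n) = P n * real (Q (Suc n))" for n by (simp add: P_def qprod_Suc)
  have rS: "r (Suc n) = real (Q (Suc n)) * r n - real (d (Suc n))" for n
    by (simp add: r_def d_def)
  have inv: "0 \<le> r n \<and> r n \<le> 1 \<and> y = (\<Sum>k\<le>n. real (d k) / P k) + r n / P n" for n
  proof (induction n)
    case 0 then show ?case using y0 y1 by (simp add: r_def d_def P_def qprod_0)
  next
    case (Suc n)
    have Q2': "Q (Suc n) \<ge> 2" using Q2 by auto
    have dd: "d (Suc n) = dig Q (Suc n) (r n)" by (simp add: d_def)
    note st = dig_step[of Q "Suc n" "r n", OF Q2']
    have i1: "0 \<le> r n" and i2: "r n \<le> 1" using Suc.IH by auto
    have a: "0 \<le> r (Suc n)" "r (Suc n) \<le> 1" using st(2)[OF i1 i2] st(3)[OF i1 i2] rS[of n] dd by auto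
    have Qp: "real (Q (Suc n)) > 0" using Q2' by simp
    have "r (Suc n) / P (Suc n) = r n / P n - real (d (Suc n)) / P (Suc n)"
      using Ppos[of n] Qp unfolding rS PS by (simp add: field_simps)
    then have "y = (\<Sum>k\<le>Suc n. real (d k) / P k) + r (Suc n) / P (Suc n)"
      using Suc.IH by simp
    then show ?case using a by simp
  qed
  have dle: "d n \<le> Q n - 1" if "n \<ge> 1" for n
  proof -
    have Qn: "Q n \<ge> 2" using Q2 that by auto
    have dn: "d n = dig Q n (r (n - 1))" using that by (simp add: d_def)
    have i1: "0 \<le> r (n - 1)" and i2: "r (n - 1) \<le> 1" using inv[of "n - 1"] by auto
    show ?thesis unfolding dn by (rule dig_step(1)[of Q n, OF Qn i1 i2])
  qed
  have rlim: "(\<lambda>n. r n / P n) \<longlonglongrightarrow> 0"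
  proof (rule tendsto_sandwich[of "\<lambda>_. 0" _ _ "\<lambda>n. 1 / P n"])
    have "0 \<le> r n / P n" for n using inv[of n] Ppos[of n] by simp
    then show "\<forall>\<^sub>F n in sequentially. 0 \<le> r n / P n" by (simp add: always_eventually)
    have "r n / P n \<le> 1 / P n" for n using inv[of n] Ppos[of n] by (simp add: divide_right_mono)
    then show "\<forall>\<^sub>F n in sequentially. r n / P n \<le> 1 / P n" by (simp add: always_eventually)
  qed (use Plim in auto)
  have dsum: "(\<lambda>k. real (d k) / P k) sums y"
    unfolding sums_def_le
  proof -
    have "(\<lambda>n. y - r n / P n) \<longlonglongrightarrow> y - 0" by (intro tendsto_diff tendsto_const rlim)
    moreover have "(\<lambda>n. y - r n / P n) = (\<lambda>n. \<Sum>k\<le>n. real (d k) / P k)"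
    proof
      fix n show "y - r n / P n = (\<Sum>k\<le>n. real (d k) / P k)" using inv[of n] by linarith
    qed
    ultimately show "(\<lambda>n. \<Sum>k\<le>n. real (d k) / P k) \<longlonglongrightarrow> y" by simp
  qed
  have dtail: "(\<lambda>j. real (d (j + Suc m)) / P (j + Suc m)) sums (r m / P m)" for m
  proof -
    have sd: "summable (\<lambda>k. real (d k) / P k)" using dsum by (rule sums_summable)
    have "y = (\<Sum>j. real (d (j + Suc m)) / P (j + Suc m)) + (\<Sum>k<Suc m. real (d k) / P k)"
      using suminf_split_initial_segment[OF sd, of "Suc m"] sums_unique[OF dsum] by simp
    moreover have "(\<Sum>k<Suc m. real (d k) / P k) = (\<Sum>k\<le>m. real (d k) / P k)"
      by (simp add: lessThan_Suc_atMost)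
    ultimately have "(\<Sum>j. real (d (j + Suc m)) / P (j + Suc m)) = r m / P m"
      using inv[of m] by simp
    moreover have "summable (\<lambda>j. real (d (j + Suc m)) / P (j + Suc m))"
      by (rule summable_ignore_initial_segment[OF sd])
    ultimately show ?thesis by (metis summable_sums)
  qed
  define e where "e n = (if n = 0 then 0 else if odd n then d n else Q n - 1 - d n)" for n
  have eo: "\<And>n. n \<noteq> 0 \<Longrightarrow> odd n \<Longrightarrow> e n = d n" by (simp add: e_def)
  have ee: "\<And>n. n \<noteq> 0 \<Longrightarrow> even n \<Longrightarrow> e n = Q n - 1 - d n" by (simp add: e_def)
  have dig: "digit_seq Q e"
    unfolding digit_seq_def
  proof (intro conjI allI impI)
    show "e 0 = 0" by (simp add: e_def)
    fix k :: nat assume k: "k \<ge> 1"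
    have "Q k \<ge> 2" using Q2 k by auto
    then show "e k < Q k" using dle[OF k] k by (auto simp: e_def)
  qed
  define A where "A n = (if n \<noteq> 0 \<and> even n then (real (Q n) - 1) / P n else 0)" for n
  define T where "T n = (-1) ^ n * real (e n) / qprod Q n" for n
  have TA: "T n = A n - real (d n) / P n" for n
  proof (cases "n = 0")
    case True then show ?thesis by (simp add: T_def A_def e_def d_def)
  next
    case False
    then have n1: "n \<ge> 1" by simp
    show ?thesis
    proof (cases "even n")
      case True
      have Qn: "Q n \<ge> 2" using Q2 n1 by auto
      have "e n = Q n - 1 - d n" using False True by (simp add: e_def)
      moreover have "d n \<le> Q n - 1" by (rule dle[OF n1])
      ultimately have "real (e n) = real (Q n - 1) - real (d n)" by (simp add: of_nat_diff)
      then have "real (e n) = real (Q n) - 1 - real (d n)" using Qn by (simp add: of_nat_diff)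
      then show ?thesis using True False by (simp add: T_def A_def P_def diff_divide_distrib)
    next
      case False
      then show ?thesis using \<open>n \<noteq> 0\<close> by (simp add: T_def A_def P_def e_def)
    qed
  qed
  have sA: "summable A"
  proof -
    have "summable (\<lambda>j. (real (Q (j + Suc 0)) - 1) / P (j + Suc 0))"
      using Ptail[of 0] by (rule sums_summable)
    then have s0: "summable (\<lambda>n. (real (Q n) - 1) / P n)"
      using summable_Suc_iff[of "\<lambda>n. (real (Q n) - 1) / P n"] by simp
    show ?thesis
    proof (rule summable_comparison_test[OF _ s0], intro exI allI impI)
      fix n :: nat assume "n \<ge> 1"
      then have "real (Q n) \<ge> 2" using Q2 by auto
      then show "norm (A n) \<le> (real (Q n) - 1) / P n"
        using Ppos[of n] unfolding A_def by simp
    qed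
  qed
  have Aa0: "A sums a0 Q"
  proof -
    have As: "A sums suminf A" using sA by (rule summable_sums)
    have sm: "strict_mono (\<lambda>k::nat. 2 * Suc k)" by (rule strict_monoI) simp
    have z: "A n = 0" if "n \<notin> range (\<lambda>k::nat. 2 * Suc k)" for n
    proof (cases "n \<noteq> 0 \<and> even n")
      case True
      then have "n = 2 * Suc (n div 2 - 1)" by auto
      then have "n \<in> range (\<lambda>k::nat. 2 * Suc k)" by blast
      with that show ?thesis by blast
    next
      case False then show ?thesis unfolding A_def by (rule if_not_P)
    qed
    have "(\<lambda>k. A (2 * Suc k)) sums suminf A"
      using sums_mono_reindex[of "\<lambda>k::nat. 2 * Suc k" A "suminf A", OF sm z] As by blast
    moreover have "(\<lambda>k. A (2 * Suc k)) = (\<lambda>k. (real (Q (2 * Suc k)) - 1) / qprod Q (2 * Suc k))"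
      by (simp add: A_def P_def)
    ultimately have "a0 Q = suminf A" unfolding a0_def by (simp add: sums_iff)
    then show ?thesis using As by simp
  qed
  have "T sums (a0 Q - y)"
  proof -
    have "(\<lambda>n. A n - real (d n) / P n) sums (a0 Q - y)" by (intro sums_diff Aa0 dsum)
    moreover have "T = (\<lambda>n. A n - real (d n) / P n)" using TA by (simp add: fun_eq_iff)
    ultimately show ?thesis by simp
  qed
  then have "T sums x" by (simp add: y_def)
  moreover have "T 0 = 0" by (simp add: T_def e_def)
  ultimately have "(\<lambda>n. T (Suc n)) sums x" using sums_Suc_iff[of T x] by simp
  then have val: "nega_val Q e = x" unfolding nega_val_def T_def by (simp add: sums_iff)
  have nsr: "\<not> second_rep Q e"
  proof
    assume "second_rep Q e"
    then obtain m where m1: "m \<ge> 1" and em: "e m < Q m - 1"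
      and pat: "\<And>j. j \<ge> 1 \<Longrightarrow> e (m + j) = (if odd j then 0 else Q (m + j) - 1)"
      unfolding second_rep_def by blast
    obtain k where k: "m = Suc k" using m1 not0_implies_Suc by force
    have Qm: "Q m \<ge> 2" using Q2 m1 by auto
    have dm: "d m = dig Q m (r k)" and rm: "r m = real (Q m) * r k - real (dig Q m (r k))"
      using rS[of k] by (simp_all add: d_def k)
    note st = dig_step[of Q m "r k", OF Qm inv[of k, THEN conjunct1] inv[of k, THEN conjunct2, THEN conjunct1]]
    show False
    proof (cases "even m")
      case True
      have "d m > 0" using em True dle[OF m1] m1 by (auto simp: e_def)
      then have "r m > 0" using st(4) True rm dm by simp
      have "d (m + j) = 0" if j: "j \<ge> 1" for j
      proof (cases "odd j")
        case True
        then have o: "odd (m + j)" and nz: "m + j \<noteq> 0" using \<open>even m\<close> by auto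
        have "e (m + j) = 0" using pat[OF j] True by simp
        then show ?thesis using eo[OF nz o] by simp
      next
        case False
        have "e (m + j) = Q (m + j) - 1" using pat[OF j] False by simp
        moreover have "d (m + j) \<le> Q (m + j) - 1" using dle[of "m+j"] m1 by simp
        moreover have o: "even (m + j)" and nz: "m + j \<noteq> 0" using False \<open>even m\<close> m1 by auto
        moreover have "Q (m + j) \<ge> 2" using Q2 m1 by auto
        ultimately show ?thesis using ee[OF nz o] by linarith
      qed
      then have "(\<lambda>j. real (d (j + Suc m)) / P (j + Suc m)) = (\<lambda>j. 0)"
      proof -
        assume h: "\<And>j. j \<ge> 1 \<Longrightarrow> d (m + j) = 0"
        show ?thesis
        proof
          fix j
          have "d (j + Suc m) = 0" using h[of "Suc j"] by (simp add: add.commute)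
          then show "real (d (j + Suc m)) / P (j + Suc m) = 0" by simp
        qed
      qed
      then have "r m / P m = 0" using dtail[of m] sums_unique sums_zero by metis
      then show False using \<open>r m > 0\<close> Ppos[of m] by simp
    next
      case False
      have "d m < Q m - 1" using em False m1 by (auto simp: e_def)
      then have "r m < 1" using st(5) False rm dm by simp
      have "d (m + j) = Q (m + j) - 1" if j: "j \<ge> 1" for j
      proof (cases "odd j")
        case True
        have "e (m + j) = 0" using pat[OF j] True by simp
        moreover have "d (m + j) \<le> Q (m + j) - 1" using dle[of "m+j"] m1 by simp
        moreover have o: "even (m + j)" and nz: "m + j \<noteq> 0" using True \<open>odd m\<close> m1 by auto
        moreover have "Q (m + j) \<ge> 2" using Q2 m1 by auto
        ultimately show ?thesis using ee[OF nz o] by linarith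
      next
        case False
        then have o: "odd (m + j)" and nz: "m + j \<noteq> 0" using \<open>odd m\<close> m1 by auto
        have "e (m + j) = Q (m + j) - 1" using pat[OF j] False by simp
        then show ?thesis using eo[OF nz o] by simp
      qed
      then have "(\<lambda>j. real (d (j + Suc m)) / P (j + Suc m)) = (\<lambda>j. (real (Q (j + Suc m)) - 1) / P (j + Suc m))"
      proof -
        assume h: "\<And>j. j \<ge> 1 \<Longrightarrow> d (m + j) = Q (m + j) - 1"
        show ?thesis
        proof
          fix j
          have "d (j + Suc m) = Q (j + Suc m) - 1" using h[of "Suc j"] by (simp add: add.commute)
          moreover have "Q (j + Suc m) \<ge> 2" using Q2 by auto
          ultimately show "real (d (j + Suc m)) / P (j + Suc m) = (real (Q (j + Suc m)) - 1) / P (j + Suc m)"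
            by (simp add: of_nat_diff)
        qed
      qed
      then have "r m / P m = 1 / P m" using dtail[of m] Ptail[of m] sums_unique by metis
      then show False using \<open>r m < 1\<close> Ppos[of m] by (simp add: divide_cancel_right)
    qed
  qed
  show ?thesis using dig nsr val by (auto simp: admissible_def)
qed

lemma first_diff:
  fixes e1 e2 :: "nat \<Rightarrow> nat"
  assumes "e1 \<noteq> e2" "e1 0 = (0::nat)" "e2 0 = 0"
  shows "\<exists>m\<ge>1. (\<forall>n<m. e1 n = e2 n) \<and> e1 m \<noteq> e2 m"
proof -
  obtain k where k: "e1 k \<noteq> e2 k" using assms(1) by auto
  define m where "m = (LEAST n. e1 n \<noteq> e2 n)"
  have m: "e1 m \<noteq> e2 m" unfolding m_def by (rule LeastI[of _ k], rule k)
  have lt: "\<forall>n<m. e1 n = e2 n" unfolding m_def using not_less_Least by blast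
  have "m \<noteq> 0"
  proof
    assume "m = 0" with m assms(2,3) show False by simp
  qed
  then show ?thesis using m lt by (intro exI[of _ m]) auto
qed

lemma sumQ:
  assumes Q2: "\<forall>k\<ge>1. 2 \<le> Q k"
  shows "summable (\<lambda>n. (real (Q n) - 1) * (1 / qprod Q n))"
proof -
  have "summable (\<lambda>j. (real (Q (j + Suc 0)) - 1) / qprod Q (j + Suc 0))"
    using P_facts(3)[OF Q2, of 0] by (rule sums_summable)
  then have "summable (\<lambda>n. (real (Q n) - 1) / qprod Q n)"
    using summable_Suc_iff[of "\<lambda>n. (real (Q n) - 1) / qprod Q n"] by simp
  then show ?thesis by simp
qed

lemma nega_V:
  assumes Q2: "\<forall>k\<ge>1. 2 \<le> Q k" and d: "digit_seq Q e"
  shows "nega_val Q e = V (\<lambda>n. 1 / qprod Q n) e"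
proof -
  have s: "summable (\<lambda>n. (-1) ^ n * real (e n) * (1 / qprod Q n))"
    by (rule V_summable[OF d _ _ sumQ[OF Q2]]) (use P_facts(1)[OF Q2] in auto)
  have "nega_val Q e = (\<Sum>n. (-1) ^ Suc n * real (e (Suc n)) * (1 / qprod Q (Suc n)))"
    unfolding nega_val_def by simp
  also have "\<dots> = V (\<lambda>n. 1 / qprod Q n) e"
    using suminf_split_head[OF s] d by (simp add: V_def digit_seq_def)
  finally show ?thesis .
qed

lemma q_facts:
  assumes q2: "2 \<le> q"
  shows "summable (\<lambda>n. (real q - 1) * (1 / real q ^ n))"
    "\<And>m. (\<Sum>j. (real q - 1) * (1 / real q ^ (j + Suc m))) = 1 / real q ^ m"
proof -
  have r2: "\<And>n. n \<ge> 1 \<Longrightarrow> real q \<ge> 2" using q2 by simp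
  have R0: "real q ^ 0 = 1" by simp
  have RS: "\<And>n. real q ^ Suc n = real q ^ n * real q" by simp
  have T3: "(\<lambda>j. (real q - 1) / real q ^ (j + Suc m)) sums (1 / real q ^ m)" for m
    by (rule tele_gen(3)[where R="\<lambda>n. real q ^ n" and r="\<lambda>_. real q", OF R0 RS r2])
  show "(\<Sum>j. (real q - 1) * (1 / real q ^ (j + Suc m))) = 1 / real q ^ m" for m
    using sums_unique[OF T3[of m]] by simp
  have "summable (\<lambda>j. (real q - 1) / real q ^ (j + Suc 0))" using T3[of 0] by (rule sums_summable)
  then have "summable (\<lambda>n. (real q - 1) / real q ^ n)"
    using summable_Suc_iff[of "\<lambda>n. (real q - 1) / real q ^ n"] by simp
  then show "summable (\<lambda>n. (real q - 1) * (1 / real q ^ n))" by simp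
qed

lemma fsum_V:
  assumes q2: "2 \<le> q" and d: "digit_seq Q e" and Qq: "\<forall>k\<ge>1. Q k \<le> q"
  shows "(\<Sum>n. real (e (Suc n)) / (- real q) ^ Suc n) = V (\<lambda>n. 1 / real q ^ n) e"
proof -
  have s: "summable (\<lambda>n. (-1) ^ n * real (e n) * (1 / real q ^ n))"
    by (rule V_summable[OF d _ _ q_facts(1)[OF q2]]) (use q2 Qq in auto)
  have eq: "real (e (Suc n)) / (- real q) ^ Suc n = (-1) ^ Suc n * real (e (Suc n)) * (1 / real q ^ Suc n)" for n
  proof (cases "even (Suc n)")
    case True
    then have "(- real q) ^ Suc n = real q ^ Suc n" "(-1::real) ^ Suc n = 1"
      using True by simp_all
    then show ?thesis by simp
  next
    case False
    then have "(- real q) ^ Suc n = - (real q ^ Suc n)" "(-1::real) ^ Suc n = -1"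
      using False by simp_all
    then show ?thesis by simp
  qed
  have "(\<Sum>n. real (e (Suc n)) / (- real q) ^ Suc n) = (\<Sum>n. (-1) ^ Suc n * real (e (Suc n)) * (1 / real q ^ Suc n))"
    using eq by simp
  also have "\<dots> = V (\<lambda>n. 1 / real q ^ n) e"
    using suminf_split_head[OF s] d by (simp add: V_def digit_seq_def)
  finally show ?thesis .
qed

lemma cmp_x:
  assumes Q2: "\<forall>k\<ge>1. 2 \<le> Q k" and a1: "admissible Q e1" and a2: "admissible Q e2"
    and m1: "m \<ge> 1" and eq: "\<forall>n<m. e1 n = e2 n"
    and D: "(-1) ^ m * (real (e2 m) - real (e1 m)) > 0"
  shows "nega_val Q e1 < nega_val Q e2"
proof -
  have d1: "digit_seq Q e1" and d2: "digit_seq Q e2" using a1 a2 by (auto simp: admissible_def)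
  have "V (\<lambda>n. 1 / qprod Q n) e1 < V (\<lambda>n. 1 / qprod Q n) e2"
  proof (rule cmp[OF a1 a2 _ _ sumQ[OF Q2] _ m1 _ D])
    show "\<And>n. n \<ge> 1 \<Longrightarrow> 0 < 1 / qprod Q n" using P_facts(1)[OF Q2] by simp
    show "\<And>n. n \<ge> 1 \<Longrightarrow> real (Q n) - 1 \<le> real (Q n) - 1" by simp
    show "\<And>n. n < m \<Longrightarrow> e1 n = e2 n" using eq by simp
    have "(\<Sum>j. (real (Q (j + Suc m)) - 1) * (1 / qprod Q (j + Suc m))) = 1 / qprod Q m"
      using sums_unique[OF P_facts(3)[OF Q2, of m]] by simp
    then show "(\<Sum>j. (real (Q (j + Suc m)) - 1) * (1 / qprod Q (j + Suc m))) \<le> 1 / qprod Q m" by simp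
  qed
  then show ?thesis using nega_V[OF Q2 d1] nega_V[OF Q2 d2] by simp
qed

lemma cmp_f:
  assumes Q2: "\<forall>k\<ge>1. 2 \<le> Q k" and q2: "2 \<le> q" and Qq: "\<forall>k\<ge>1. Q k \<le> q"
    and a1: "admissible Q e1" and a2: "admissible Q e2"
    and m1: "m \<ge> 1" and eq: "\<forall>n<m. e1 n = e2 n"
    and D: "(-1) ^ m * (real (e2 m) - real (e1 m)) > 0"
  shows "(\<Sum>n. real (e1 (Suc n)) / (- real q) ^ Suc n) < (\<Sum>n. real (e2 (Suc n)) / (- real q) ^ Suc n)"
proof -
  have d1: "digit_seq Q e1" and d2: "digit_seq Q e2" using a1 a2 by (auto simp: admissible_def)
  have "V (\<lambda>n. 1 / real q ^ n) e1 < V (\<lambda>n. 1 / real q ^ n) e2"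
  proof (rule cmp[OF a1 a2 _ _ q_facts(1)[OF q2] _ m1 _ D])
    show "\<And>n. n \<ge> 1 \<Longrightarrow> 0 < 1 / real q ^ n" using q2 by simp
    show "\<And>n. n \<ge> 1 \<Longrightarrow> real (Q n) - 1 \<le> real q - 1" using Qq by simp
    show "\<And>n. n < m \<Longrightarrow> e1 n = e2 n" using eq by simp
    show "(\<Sum>j. (real q - 1) * (1 / real q ^ (j + Suc m))) \<le> 1 / real q ^ m"
      using q_facts(2)[OF q2, of m] by simp
  qed
  then show ?thesis using fsum_V[OF q2 d1 Qq] fsum_V[OF q2 d2 Qq] by simp
qed

lemma rep_ok:
  assumes Q2: "\<forall>k\<ge>1. 2 \<le> Q k" and x: "x \<in> {a0 Q - 1 .. a0 Q}"
  shows "admissible Q (nega_rep Q x) \<and> nega_val Q (nega_rep Q x) = x"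
proof -
  have "\<exists>!e. admissible Q e \<and> nega_val Q e = x"
  proof (rule ex_ex1I)
    show "\<exists>e. admissible Q e \<and> nega_val Q e = x" by (rule exists_rep[OF Q2 x])
    fix e1 e2 assume h1: "admissible Q e1 \<and> nega_val Q e1 = x" and h2: "admissible Q e2 \<and> nega_val Q e2 = x"
    show "e1 = e2"
    proof (rule ccontr)
      assume ne: "e1 \<noteq> e2"
      have z: "e1 0 = 0" "e2 0 = 0" using h1 h2 by (auto simp: admissible_def digit_seq_def)
      obtain m where m1: "m \<ge> 1" and eq: "\<forall>n<m. e1 n = e2 n" and mm: "e1 m \<noteq> e2 m"
        using first_diff[OF ne z] by blast
      have "(-1) ^ m * (real (e2 m) - real (e1 m)) \<noteq> (0::real)" using mm by simp
      then consider "(-1) ^ m * (real (e2 m) - real (e1 m)) > (0::real)"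
        | "(-1) ^ m * (real (e1 m) - real (e2 m)) > (0::real)"
        by (smt (verit, ccfv_SIG) mult_minus_right)
      then show False
      proof cases
        case 1
        then show False using cmp_x[OF Q2 _ _ m1 eq] h1 h2 by fastforce
      next
        case 2
        have eq': "\<forall>n<m. e2 n = e1 n" using eq by simp
        show False using cmp_x[OF Q2 _ _ m1 eq' 2] h1 h2 by fastforce
      qed
    qed
  qed
  then show ?thesis unfolding nega_rep_def by (rule theI')
qed

theorem mainTheorem3:
  fixes Q :: "nat \<Rightarrow> nat" and q :: nat and x1 x2 :: real
  assumes "\<forall>k\<ge>1. 2 \<le> Q k"
    and "2 \<le> q"
    and "\<forall>k\<ge>1. Q k \<le> q"
    and "x1 \<in> {a0 Q - 1 .. a0 Q}"
    and "x2 \<in> {a0 Q - 1 .. a0 Q}"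
    and "x1 < x2"
  shows "fmap Q q x1 < fmap Q q x2"
proof -
  note Q2 = assms(1)
  define e1 where "e1 = nega_rep Q x1"
  define e2 where "e2 = nega_rep Q x2"
  have h1: "admissible Q e1" "nega_val Q e1 = x1" using rep_ok[OF Q2 assms(4)] by (auto simp: e1_def)
  have h2: "admissible Q e2" "nega_val Q e2 = x2" using rep_ok[OF Q2 assms(5)] by (auto simp: e2_def)
  have ne: "e1 \<noteq> e2" using h1 h2 assms(6) by auto
  have z: "e1 0 = 0" "e2 0 = 0" using h1 h2 by (auto simp: admissible_def digit_seq_def)
  obtain m where m1: "m \<ge> 1" and eq: "\<forall>n<m. e1 n = e2 n" and mm: "e1 m \<noteq> e2 m"
    using first_diff[OF ne z] by blast
  have "(-1) ^ m * (real (e2 m) - real (e1 m)) \<noteq> (0::real)" using mm by simp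
  moreover have "\<not> (-1) ^ m * (real (e1 m) - real (e2 m)) > (0::real)"
  proof
    assume "(-1) ^ m * (real (e1 m) - real (e2 m)) > (0::real)"
    moreover have eq': "\<forall>n<m. e2 n = e1 n" using eq by simp
    ultimately have "nega_val Q e2 < nega_val Q e1" using cmp_x[OF Q2 h2(1) h1(1) m1 eq'] by blast
    then show False using h1 h2 assms(6) by simp
  qed
  ultimately have D: "(-1) ^ m * (real (e2 m) - real (e1 m)) > (0::real)"
    by (smt (verit, ccfv_SIG) mult_minus_right)
  show ?thesis
    using cmp_f[OF Q2 assms(2) assms(3) h1(1) h2(1) m1 eq D]
    unfolding fmap_def e1_def e2_def .
qed

end
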